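(* Let $G=G(n_1,n_2,p)$ where $1\ll n_1\leq n_2$. If $p=\frac{d}{\sqrt{n_1n_2}}$ for a constant $d<1$, then whp $G$ has no complex component.
   Context: $G(n_1,n_2,p)$ is the binomial random bipartite graph: each edge of $K_{n_1,n_2}$ is present independently with probability $p$. A component of a graph is complex if it contains more than one cycle. $1\ll n_1$ means $n_1\to\infty$; "whp" means with probability tending to $1$ as $n_1\to\infty$. *)

theory Defs
  imports "HOL-Probability.Probability"
begin

text \<open>Vertex classes are
  Inl ` {..<n1} and Inr ` {..<n2}; a graph is given by its edge indicator
  E :: nat \<times> nat \<Rightarrow> bool, where E (i,j) means that Inl i and Inr j are adjacent.\<close>

definition bip_random_graph :: "nat \<Rightarrow> nat \<Rightarrow> real \<Rightarrow> (nat \<times> nat \<Rightarrow> bool) pmf" where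
  "bip_random_graph n1 n2 p = Pi_pmf ({..<n1} \<times> {..<n2}) False (\<lambda>_. bernoulli_pmf p)"

definition bip_vertices :: "nat \<Rightarrow> nat \<Rightarrow> (nat + nat) set" where
  "bip_vertices n1 n2 = Inl ` {..<n1} \<union> Inr ` {..<n2}"

definition bip_adj :: "nat \<Rightarrow> nat \<Rightarrow> (nat \<times> nat \<Rightarrow> bool) \<Rightarrow> nat + nat \<Rightarrow> nat + nat \<Rightarrow> bool" where
  "bip_adj n1 n2 E u v =
     (case (u, v) of
        (Inl i, Inr j) \<Rightarrow> i < n1 \<and> j < n2 \<and> E (i, j)
      | (Inr j, Inl i) \<Rightarrow> i < n1 \<and> j < n2 \<and> E (i, j)
      | _ \<Rightarrow> False)"

definition is_cycle :: "('v \<Rightarrow> 'v \<Rightarrow> bool) \<Rightarrow> 'v list \<Rightarrow> bool" where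
  "is_cycle A cs \<longleftrightarrow> length cs \<ge> 3 \<and> distinct cs \<and>
     (\<forall>i < length cs. A (cs ! i) (cs ! ((i + 1) mod length cs)))"

text \<open>The edge set of a cycle (cycles are identified with their edge sets).\<close>
definition cycle_edges :: "'v list \<Rightarrow> 'v set set" where
  "cycle_edges cs = {{cs ! i, cs ! ((i + 1) mod length cs)} | i. i < length cs}"

definition components :: "'v set \<Rightarrow> ('v \<Rightarrow> 'v \<Rightarrow> bool) \<Rightarrow> 'v set set" where
  "components V A = {{w \<in> V. A\<^sup>*\<^sup>* v w} | v. v \<in> V}"

definition complex_component :: "'v set \<Rightarrow> ('v \<Rightarrow> 'v \<Rightarrow> bool) \<Rightarrow> 'v set \<Rightarrow> bool" where
  "complex_component V A C \<longleftrightarrow> C \<in> components V A \<and>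
     (\<exists>c1 c2. is_cycle A c1 \<and> is_cycle A c2 \<and> set c1 \<subseteq> C \<and> set c2 \<subseteq> C \<and>
              cycle_edges c1 \<noteq> cycle_edges c2)"

definition has_complex_component :: "nat \<Rightarrow> nat \<Rightarrow> (nat \<times> nat \<Rightarrow> bool) \<Rightarrow> bool" where
  "has_complex_component n1 n2 E \<longleftrightarrow>
     (\<exists>C. complex_component (bip_vertices n1 n2) (bip_adj n1 n2 E) C)"

end

theory Submission
  imports Defs
begin


definition cyc :: "('v \<Rightarrow> 'v \<Rightarrow> bool) \<Rightarrow> 'v list \<Rightarrow> bool" where
  "cyc R vs \<longleftrightarrow> (\<forall>k<length vs. R (vs!k) (vs!(Suc k mod length vs)))"

lemma cyc_rotate:
  assumes "cyc R vs" shows "cyc R (rotate t vs)"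
  unfolding cyc_def
proof (intro allI impI)
  fix k assume k: "k < length (rotate t vs)"
  define L where "L = length vs"
  have L: "k < L" "0 < L" using k by (auto simp: L_def)
  have 1: "rotate t vs ! k = vs ! ((t + k) mod L)" using L by (simp add: nth_rotate L_def)
  have 2: "rotate t vs ! (Suc k mod L) = vs ! ((t + Suc k mod L) mod L)"
    using L by (simp add: nth_rotate L_def)
  have 3: "(t + Suc k mod L) mod L = Suc ((t + k) mod L) mod L"
    by (simp add: mod_Suc_eq mod_add_right_eq)
  have "R (vs ! ((t + k) mod L)) (vs ! (Suc ((t + k) mod L) mod L))"
    using assms L unfolding cyc_def L_def by simp
  then show "R (rotate t vs ! k) (rotate t vs ! (Suc k mod length (rotate t vs)))"
    using 1 2 3 by (simp add: L_def)
qed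

lemma cyc_succ: "cyc R vs \<Longrightarrow> successively R vs"
  unfolding cyc_def successively_conv_nth
  by (metis Suc_lessD mod_less)

lemma core:
  fixes R :: "'v \<Rightarrow> 'v \<Rightarrow> bool"
  assumes fin: "finite W" and inW: "\<And>u v. R u v \<Longrightarrow> u \<in> W"
    and sym: "\<And>u v. R u v \<Longrightarrow> R v u" and irr: "\<And>u. \<not> R u u"
    and deg2: "\<And>w. w \<in> W \<Longrightarrow> \<exists>a b. a \<noteq> b \<and> R w a \<and> R w b"
    and x: "R x a" "R x b" "R x c" "a \<noteq> b" "a \<noteq> c" "b \<noteq> c"
    and conn: "\<And>S. S \<subseteq> W \<Longrightarrow> (\<forall>u v. u \<in> S \<longrightarrow> R u v \<longrightarrow> v \<in> S) \<Longrightarrow> S \<noteq> {} \<Longrightarrow> x \<in> S"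
  shows "\<exists>vs i j. distinct vs \<and> successively R vs \<and> 2 \<le> i \<and> i < length vs \<and> j + 3 \<le> length vs
     \<and> R (vs!0) (vs!i) \<and> R (vs!(length vs - 1)) (vs!j) \<and> \<not> (i = length vs - 1 \<and> j = 0)"
proof -
  define P where "P ws \<longleftrightarrow> ws \<noteq> [] \<and> distinct ws \<and> successively R ws \<and> set ws \<subseteq> W" for ws
  have xW: "x \<in> W" using inW x(1) by blast
  have P1: "P [x]" using xW by (simp add: P_def)
  have bound: "length ws \<le> card W" if "P ws" for ws
    using that fin by (metis P_def card_mono distinct_card)
  have "\<exists>n. (\<exists>ws. P ws \<and> length ws = n) \<and> (\<forall>y. (\<exists>ws. P ws \<and> length ws = y) \<longrightarrow> y \<le> n)"
    apply (rule ex_has_greatest_nat[where k=1 and b="Suc (card W)"]) using P1 bound by (auto simp: less_Suc_eq_le)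
  then obtain n where n: "\<exists>ws. P ws \<and> length ws = n" and nmax: "\<forall>y. (\<exists>ws. P ws \<and> length ws = y) \<longrightarrow> y \<le> n"
    by blast
  obtain vs where Pvs: "P vs" and lvs: "length vs = n" using n by blast
  have max: "length ws \<le> length vs" if "P ws" for ws using nmax that lvs by blast
  define m where "m = length vs"
  have vs: "vs \<noteq> []" "distinct vs" "successively R vs" "set vs \<subseteq> W" using Pvs by (auto simp: P_def)
  have m0: "0 < m" using vs by (simp add: m_def)
  have front: "y \<in> set vs" if "R (vs!0) y" for y
  proof (rule ccontr)
    assume ny: "y \<notin> set vs"
    have "R y (hd vs)" using sym[OF that] vs by (simp add: hd_conv_nth)
    moreover have "y \<in> W" using inW[OF sym[OF that]] .
    ultimately have "P (y # vs)" using vs ny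
      by (auto simp: P_def successively_Cons)
    then show False using max by fastforce
  qed
  have bck: "y \<in> set vs" if "R (vs!(m-1)) y" for y
  proof (rule ccontr)
    assume ny: "y \<notin> set vs"
    have "R (last vs) y" using that vs by (simp add: last_conv_nth m_def)
    moreover have "y \<in> W" using inW[OF sym[OF that]] .
    ultimately have "P (vs @ [y])" using vs ny
      by (auto simp: P_def successively_append_iff)
    then show False using max by fastforce
  qed
  have v0W: "vs!0 \<in> W" using vs m0 by (auto simp: m_def)
  have vlW: "vs!(m-1) \<in> W" using vs m0 by (auto simp: m_def)
  have succ: "R (vs!k) (vs!Suc k)" if "Suc k < m" for k
    using vs(3) that by (simp add: successively_nth m_def)
  obtain i0 where i0: "2 \<le> i0" "i0 < m" "R (vs!0) (vs!i0)"
  proof -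
    obtain a0 b0 where ab: "a0 \<noteq> b0" "R (vs!0) a0" "R (vs!0) b0" using deg2[OF v0W] by blast
    obtain ia where ia: "ia < m" "vs!ia = a0" using front[OF ab(2)] by (auto simp: in_set_conv_nth m_def)
    obtain ib where ib: "ib < m" "vs!ib = b0" using front[OF ab(3)] by (auto simp: in_set_conv_nth m_def)
    have "ia \<noteq> 0" using ia ab irr by metis
    moreover have "ib \<noteq> 0" using ib ab irr by metis
    moreover have "ia \<noteq> ib" using ia ib ab by auto
    ultimately have "2 \<le> ia \<or> 2 \<le> ib" by linarith
    then show ?thesis
    proof
      assume "2 \<le> ia" then show ?thesis using that ia ab by blast
    next
      assume "2 \<le> ib" then show ?thesis using that ib ab by blast
    qed
  qed
  have m3: "3 \<le> m" using i0 by simp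
  obtain j0 where j0: "j0 + 3 \<le> m" "R (vs!(m-1)) (vs!j0)"
  proof -
    obtain a0 b0 where ab: "a0 \<noteq> b0" "R (vs!(m-1)) a0" "R (vs!(m-1)) b0" using deg2[OF vlW] by blast
    obtain ia where ia: "ia < m" "vs!ia = a0" using bck[OF ab(2)] by (auto simp: in_set_conv_nth m_def)
    obtain ib where ib: "ib < m" "vs!ib = b0" using bck[OF ab(3)] by (auto simp: in_set_conv_nth m_def)
    have "ia \<noteq> m-1" using ia ab irr by metis
    moreover have "ib \<noteq> m-1" using ib ab irr by metis
    moreover have "ia \<noteq> ib" using ia ib ab by auto
    ultimately have "ia + 3 \<le> m \<or> ib + 3 \<le> m" using ia ib by linarith
    then show ?thesis
    proof
      assume "ia + 3 \<le> m" then show ?thesis using that ia ab by blast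
    next
      assume "ib + 3 \<le> m" then show ?thesis using that ib ab by blast
    qed
  qed
  show ?thesis
  proof (cases "\<exists>i. 2 \<le> i \<and> i < m - 1 \<and> R (vs!0) (vs!i)")
    case True
    then obtain i where "2 \<le> i \<and> i < m - 1 \<and> R (vs!0) (vs!i)" by blast
    then show ?thesis using vs j0 unfolding m_def by (intro exI[of _ vs] exI[of _ i] exI[of _ j0]) auto
  next
    case nf: False
    show ?thesis
    proof (cases "\<exists>j. 0 < j \<and> j + 3 \<le> m \<and> R (vs!(m-1)) (vs!j)")
      case True
      then obtain j where "0 < j \<and> j + 3 \<le> m \<and> R (vs!(m-1)) (vs!j)" by blast
      then show ?thesis using vs i0 unfolding m_def by (intro exI[of _ vs] exI[of _ i0] exI[of _ j]) auto
    next
      case False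
      have "i0 = m - 1" proof (rule ccontr) assume "i0 \<noteq> m - 1" then have "i0 < m - 1" using i0 by linarith then show False using nf i0 by blast qed
      then have close: "R (vs!(m-1)) (vs!0)" using i0 sym[of "vs!0" "vs!i0"] by auto
      have cv: "cyc R vs" unfolding cyc_def
      proof (intro allI impI)
        fix k assume k: "k < length vs"
        show "R (vs ! k) (vs ! (Suc k mod length vs))"
        proof (cases "Suc k < m")
          case True then show ?thesis using succ by (simp add: m_def)
        next
          case False then have "k = m - 1" "Suc k = m" using k by (auto simp: m_def)
          then show ?thesis using close by (simp add: m_def)
        qed
      qed
      have closed: "\<forall>u v. u \<in> set vs \<longrightarrow> R u v \<longrightarrow> v \<in> set vs"
      proof (intro allI impI, rule ccontr)
        fix u v assume u: "u \<in> set vs" and uv: "R u v" and nv: "v \<notin> set vs"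
        obtain t where t: "t < m" "vs!t = u" using u by (auto simp: in_set_conv_nth m_def)
        have hd: "hd (rotate t vs) = u" using t vs by (simp add: hd_rotate_conv_nth m_def)
        have "R v (hd (rotate t vs))" using sym[OF uv] hd by simp
        moreover have "v \<in> W" using inW[OF sym[OF uv]] .
        ultimately have "P (v # rotate t vs)"
          using vs nv cyc_succ[OF cyc_rotate[OF cv, of t]]
          by (auto simp: P_def successively_Cons)
        then show False using max by fastforce
      qed
      have "x \<in> set vs" using conn[OF vs(4) closed] vs(1) by simp
      then obtain t where t: "t < m" "vs!t = x" by (auto simp: in_set_conv_nth m_def)
      define ws where "ws = rotate t vs"
      have ws: "distinct ws" "length ws = m" "set ws = set vs" "cyc R ws"
        using vs cyc_rotate[OF cv] by (auto simp: ws_def m_def)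
      have ws0: "ws!0 = x" using t m0 by (simp add: ws_def nth_rotate m_def)
      have inws: "y \<in> set ws" if "R x y" for y using closed that \<open>x \<in> set vs\<close> ws(3) by blast
      obtain ia where ia: "ia < m" "ws!ia = a" using inws[OF x(1)] ws(2) by (auto simp: in_set_conv_nth)
      obtain ib where ib: "ib < m" "ws!ib = b" using inws[OF x(2)] ws(2) by (auto simp: in_set_conv_nth)
      obtain ic where ic: "ic < m" "ws!ic = c" using inws[OF x(3)] ws(2) by (auto simp: in_set_conv_nth)
      have "ia \<noteq> 0" "ib \<noteq> 0" "ic \<noteq> 0" using ia ib ic ws0 x irr by metis+
      moreover have "ia \<noteq> ib" "ia \<noteq> ic" "ib \<noteq> ic" using ia ib ic x by auto
      ultimately have "(2 \<le> ia \<and> ia \<noteq> m - 1) \<or> (2 \<le> ib \<and> ib \<noteq> m - 1) \<or> (2 \<le> ic \<and> ic \<noteq> m - 1)"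
        by linarith
      then obtain i where i: "i < m" "2 \<le> i" "i \<noteq> m - 1" "R x (ws!i)"
        using ia ib ic x by blast
      have "m - 1 < m" "Suc (m-1) = m" using m0 by auto
      then have "R (ws!(m-1)) (ws!(Suc (m-1) mod m))" using ws(4) ws(2) unfolding cyc_def by metis
      then have cl: "R (ws!(m-1)) (ws!0)" using m0 by simp
      show ?thesis using ws i cl ws0 m3 cyc_succ[OF ws(4)]
        by (intro exI[of _ ws] exI[of _ i] exI[of _ 0]) auto
    qed
  qed
qed



lemma cyc_edge_mem:
  assumes "is_cycle A c" "e \<in> cycle_edges c"
  shows "\<exists>u v. e = {u,v} \<and> u \<noteq> v \<and> u \<in> set c \<and> v \<in> set c \<and> A u v"
proof -
  obtain i where i: "i < length c" "e = {c!i, c!((i+1) mod length c)}"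
    using assms(2) by (auto simp: cycle_edges_def)
  have L: "3 \<le> length c" "distinct c" using assms(1) by (auto simp: is_cycle_def)
  have ne: "i \<noteq> (i+1) mod length c"
  proof (cases "i + 1 < length c")
    case True then show ?thesis by simp
  next
    case False then have "i + 1 = length c" using i by simp
    then show ?thesis using L by simp
  qed
  have "(i+1) mod length c < length c" using L(1) by (intro mod_less_divisor) linarith
  note bd = this
  then have "c!i \<noteq> c!((i+1) mod length c)"
    using ne L i by (simp add: nth_eq_iff_index_eq)
  moreover have "A (c!i) (c!((i+1) mod length c))" using assms(1) i by (auto simp: is_cycle_def)
  ultimately show ?thesis using i L bd by (intro exI[of _ "c!i"] exI[of _ "c!((i+1) mod length c)"]) auto
qed

lemma cyc_deg2:
  assumes "is_cycle A c" "x \<in> set c"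
  shows "\<exists>a b. a \<noteq> b \<and> {x,a} \<in> cycle_edges c \<and> {x,b} \<in> cycle_edges c"
proof -
  define L where "L = length c"
  have L: "3 \<le> L" "distinct c" using assms(1) by (auto simp: is_cycle_def L_def)
  obtain k where k: "k < L" "c!k = x" using assms(2) by (auto simp: in_set_conv_nth L_def)
  define p where "p = (if k = 0 then L - 1 else k - 1)"
  have p: "p < L" "(p+1) mod L = k" using k L by (auto simp: p_def)
  have e1: "{x, c!((k+1) mod L)} \<in> cycle_edges c" using k by (auto simp: cycle_edges_def L_def)
  have "{c!p, c!((p+1) mod L)} \<in> cycle_edges c" using p by (auto simp: cycle_edges_def L_def)
  then have e2: "{x, c!p} \<in> cycle_edges c" using p k by (simp add: insert_commute)
  have "(k+1) mod L \<noteq> p"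
  proof (cases "k + 1 < L")
    case True then show ?thesis using k L by (auto simp: p_def)
  next
    case False then have "k + 1 = L" using k by linarith
    then show ?thesis using k L by (auto simp: p_def)
  qed
  moreover have "(k+1) mod L < L" using L(1) by (intro mod_less_divisor) linarith
  ultimately have "c!((k+1) mod L) \<noteq> c!p" using L p k by (simp add: nth_eq_iff_index_eq L_def)
  then show ?thesis using e1 e2 by blast
qed

lemma cyc_closure:
  assumes "is_cycle A c" "u \<in> set c" "u \<in> S"
    and cl: "\<And>i. i < length c \<Longrightarrow> c!i \<in> S \<Longrightarrow> c!((i+1) mod length c) \<in> S"
  shows "set c \<subseteq> S"
proof -
  define L where "L = length c"
  have L: "0 < L" using assms(1) by (auto simp: is_cycle_def L_def)
  obtain k where k: "k < L" "c!k = u" using assms(2) by (auto simp: in_set_conv_nth L_def)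
  have *: "c!((k + n) mod L) \<in> S" for n
  proof (induction n)
    case 0 then show ?case using k assms(3) by simp
  next
    case (Suc n)
    have "c!(((k+n) mod L + 1) mod L) \<in> S" using cl[of "(k+n) mod L"] Suc L by (simp add: L_def)
    moreover have "((k+n) mod L + 1) mod L = (k + Suc n) mod L" by (simp add: mod_Suc_eq)
    ultimately show ?case by simp
  qed
  show ?thesis
  proof
    fix w assume "w \<in> set c"
    then obtain i where i: "i < L" "c!i = w" by (auto simp: in_set_conv_nth L_def)
    have "(k + (i + L - k)) mod L = i" using i k by simp
    then show "w \<in> S" using *[of "i + L - k"] i by simp
  qed
qed

lemma path_closure:
  assumes "\<And>i. Suc i < length Q \<Longrightarrow> Q!i \<in> S \<longleftrightarrow> Q!Suc i \<in> S" "k < length Q" "Q!k \<in> S"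
  shows "set Q \<subseteq> S"
proof -
  have *: "i < length Q \<Longrightarrow> (Q!i \<in> S \<longleftrightarrow> Q!0 \<in> S)" for i
    by (induction i) (use assms(1) in auto)
  show ?thesis using *[of k] * assms(2,3) by (auto simp: in_set_conv_nth)
qed

lemma walk_of:
  assumes "A\<^sup>*\<^sup>* u w"
  shows "\<exists>ws. ws \<noteq> [] \<and> hd ws = u \<and> last ws = w \<and> successively A ws"
  using assms
proof (induction rule: rtranclp_induct)
  case base then show ?case by (intro exI[of _ "[u]"]) auto
next
  case (step y z)
  then obtain ws where "ws \<noteq> [] \<and> hd ws = u \<and> last ws = y \<and> successively A ws" by blast
  then show ?case by (intro exI[of _ "ws @ [z]"]) (auto simp: successively_append_iff step)
qed

lemma successively_take: "successively A xs \<Longrightarrow> successively A (take n xs)"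
  using successively_append_iff[of A "take n xs" "drop n xs"] by simp
lemma successively_drop: "successively A xs \<Longrightarrow> successively A (drop n xs)"
  using successively_append_iff[of A "take n xs" "drop n xs"] by simp

lemma shortest:
  assumes "A\<^sup>*\<^sup>* u w" "u \<in> S1" "w \<in> S2" "S1 \<inter> S2 = {}"
  shows "\<exists>Q. distinct Q \<and> successively A Q \<and> 2 \<le> length Q \<and> Q!0 \<in> S1 \<and> last Q \<in> S2 \<and> Q!1 \<notin> S1"
proof -
  define P where "P ws \<longleftrightarrow> ws \<noteq> [] \<and> successively A ws \<and> hd ws \<in> S1 \<and> last ws \<in> S2" for ws
  obtain ws where "P ws" using walk_of[OF assms(1)] assms(2,3) by (auto simp: P_def)
  then obtain Q where PQ: "P Q" and minQ: "\<And>ys. P ys \<Longrightarrow> length Q \<le> length ys"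
    using ex_has_least_nat[of P ws length] by blast
  have Q: "Q \<noteq> []" "successively A Q" "hd Q \<in> S1" "last Q \<in> S2" using PQ by (auto simp: P_def)
  have len: "2 \<le> length Q"
  proof (rule ccontr)
    assume "\<not> 2 \<le> length Q"
    then have "length Q = 1" using Q(1) by (cases Q) (auto simp: not_le)
    then obtain z where "Q = [z]" by (metis One_nat_def length_0_conv length_Suc_conv)
    then show False using Q assms(4) by auto
  qed
  have hd0: "hd Q = Q!0" using Q(1) by (simp add: hd_conv_nth)
  have q1: "Q!1 \<notin> S1"
  proof
    assume "Q!1 \<in> S1"
    obtain a b rest where qq: "Q = a # b # rest" using len
      by (auto simp: Suc_le_length_iff numeral_2_eq_2)
    have "P (tl Q)" using Q \<open>Q!1 \<in> S1\<close> qq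
      by (auto simp: P_def successively_Cons)
    then show False using minQ[of "tl Q"] len by auto
  qed
  have dist: "distinct Q"
  proof (rule ccontr)
    assume "\<not> distinct Q"
    then obtain a b where ab: "a < b" "b < length Q" "Q!a = Q!b"
      by (auto simp: distinct_conv_nth) (metis nat_neq_iff)
    define Q' where "Q' = take a Q @ drop b Q"
    have sa: "successively A (take a Q)" "successively A (drop b Q)"
      using Q(2) by (auto intro: successively_take successively_drop)
    have dec: "successively A (take a Q @ drop a Q)" using Q(2) by simp
    have hdb: "hd (drop b Q) = Q!a" using ab by (simp add: hd_drop_conv_nth)
    have hda: "hd (drop a Q) = Q!a" using ab by (simp add: hd_drop_conv_nth)
    have dec2: "take a Q = [] \<or> drop a Q = [] \<or> A (last (take a Q)) (hd (drop a Q))"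
      using dec by (simp only: successively_append_iff)
    have "drop a Q \<noteq> []" using ab by simp
    then have junc: "take a Q = [] \<or> A (last (take a Q)) (Q!a)"
      using dec2 hda by auto
    have "take a Q = [] \<or> drop b Q = [] \<or> A (last (take a Q)) (hd (drop b Q))"
      using junc hdb by auto
    then have "successively A Q'" using sa by (simp only: Q'_def successively_append_iff)
    moreover have "Q' \<noteq> []" using ab by (simp add: Q'_def)
    moreover have "hd Q' \<in> S1"
    proof (cases "a = 0")
      case True then show ?thesis using hdb ab Q(3) hd0 by (simp add: Q'_def)
    next
      case False then show ?thesis using ab Q(3) hd0 by (auto simp: Q'_def hd_append)
    qed
    moreover have "last Q' \<in> S2" using ab Q(4) by (simp add: Q'_def)
    ultimately have "P Q'" by (simp add: P_def)
    then show False using minQ[of Q'] ab by (simp add: Q'_def)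
  qed
  show ?thesis using dist Q len q1 hd0 by auto
qed


definition witness :: "('v \<Rightarrow> 'v \<Rightarrow> bool) \<Rightarrow> 'v list \<Rightarrow> nat \<Rightarrow> nat \<Rightarrow> bool" where
  "witness A vs i j \<longleftrightarrow> distinct vs \<and> successively A vs \<and> 2 \<le> i \<and> i < length vs \<and> j + 3 \<le> length vs
     \<and> A (vs!0) (vs!i) \<and> A (vs!(length vs - 1)) (vs!j) \<and> \<not> (i = length vs - 1 \<and> j = 0)"

lemma core_A:
  fixes A :: "'v \<Rightarrow> 'v \<Rightarrow> bool" and F :: "'v set set"
  assumes symA: "\<And>u v. A u v \<Longrightarrow> A v u" and fin: "finite W"
    and Fp: "\<And>e. e \<in> F \<Longrightarrow> \<exists>u v. e = {u,v} \<and> u \<noteq> v \<and> u \<in> W \<and> v \<in> W \<and> A u v"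
    and deg2: "\<And>w. w \<in> W \<Longrightarrow> \<exists>a b. a \<noteq> b \<and> {w,a} \<in> F \<and> {w,b} \<in> F"
    and x: "{x,a} \<in> F" "{x,b} \<in> F" "{x,c} \<in> F" "a \<noteq> b" "a \<noteq> c" "b \<noteq> c"
    and conn: "\<And>S. S \<subseteq> W \<Longrightarrow> (\<forall>u v. u \<in> S \<longrightarrow> {u,v} \<in> F \<longrightarrow> v \<in> S) \<Longrightarrow> S \<noteq> {} \<Longrightarrow> x \<in> S"
  shows "\<exists>vs i j. witness A vs i j"
proof -
  define R where "R u v \<longleftrightarrow> {u,v} \<in> F" for u v
  have RA: "A u v" if "R u v" for u v
  proof -
    have "{u,v} \<in> F" using that by (simp add: R_def)
    then obtain a b where "{u,v} = {a,b}" "A a b" using Fp[of "{u,v}"] by blast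
    then show ?thesis using symA by (auto simp: doubleton_eq_iff)
  qed
  have inW: "u \<in> W" if "R u v" for u v
  proof -
    have "{u,v} \<in> F" using that by (simp add: R_def)
    then obtain a b where "{u,v} = {a,b}" "a \<in> W" "b \<in> W" using Fp[of "{u,v}"] by blast
    then show ?thesis by (auto simp: doubleton_eq_iff)
  qed
  have sym: "R v u" if "R u v" for u v using that by (simp add: R_def insert_commute)
  have irr: "\<not> R u u" for u
    using Fp[of "{u,u}"] by (auto simp: R_def doubleton_eq_iff)
  have "\<exists>vs i j. distinct vs \<and> successively R vs \<and> 2 \<le> i \<and> i < length vs \<and> j + 3 \<le> length vs
     \<and> R (vs!0) (vs!i) \<and> R (vs!(length vs - 1)) (vs!j) \<and> \<not> (i = length vs - 1 \<and> j = 0)"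
  proof (rule core[where x=x and a=a and b=b and c=c and W=W and R=R])
    show "finite W" by (rule fin)
    show "\<And>u v. R u v \<Longrightarrow> u \<in> W" by (rule inW)
    show "\<And>u v. R u v \<Longrightarrow> R v u" by (rule sym)
    show "\<And>u. \<not> R u u" by (rule irr)
    show "\<And>w. w \<in> W \<Longrightarrow> \<exists>a b. a \<noteq> b \<and> R w a \<and> R w b" using deg2 by (simp add: R_def)
    show "R x a" "R x b" "R x c" "a \<noteq> b" "a \<noteq> c" "b \<noteq> c" using x by (simp_all add: R_def)
    show "\<And>S. S \<subseteq> W \<Longrightarrow> (\<forall>u v. u \<in> S \<longrightarrow> R u v \<longrightarrow> v \<in> S) \<Longrightarrow> S \<noteq> {} \<Longrightarrow> x \<in> S"
      using conn by (simp add: R_def)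
  qed
  then obtain vs i j where "distinct vs \<and> successively R vs \<and> 2 \<le> i \<and> i < length vs \<and> j + 3 \<le> length vs
     \<and> R (vs!0) (vs!i) \<and> R (vs!(length vs - 1)) (vs!j) \<and> \<not> (i = length vs - 1 \<and> j = 0)" by blast
  then have "witness A vs i j" unfolding witness_def using RA successively_mono[of R vs A] by blast
  then show ?thesis by blast
qed


lemma cyc_edge_in: "is_cycle A c \<Longrightarrow> i < length c \<Longrightarrow> {c!i, c!((i+1) mod length c)} \<in> cycle_edges c"
  unfolding cycle_edges_def by blast

lemma cyc_edge_other:
  assumes "is_cycle A c" "{x,y} \<in> cycle_edges c" shows "y \<in> set c"
proof -
  obtain u v where "{x,y} = {u,v}" "u \<in> set c" "v \<in> set c" using cyc_edge_mem[OF assms] by blast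
  then show ?thesis by (auto simp: doubleton_eq_iff)
qed

lemma cyc_edge_other':
  assumes "is_cycle A c" "{x,y} \<in> cycle_edges c" shows "x \<in> set c"
proof -
  obtain u v where "{x,y} = {u,v}" "u \<in> set c" "v \<in> set c" using cyc_edge_mem[OF assms] by blast
  then show ?thesis by (auto simp: doubleton_eq_iff)
qed

lemma Fp_cyc:
  assumes "is_cycle A c" "e \<in> cycle_edges c" "set c \<subseteq> W"
  shows "\<exists>u v. e = {u,v} \<and> u \<noteq> v \<and> u \<in> W \<and> v \<in> W \<and> A u v"
proof -
  obtain u v where h: "e = {u,v}" "u \<noteq> v" "u \<in> set c" "v \<in> set c" "A u v"
    using cyc_edge_mem[OF assms(1,2)] by blast
  have "u \<in> W" "v \<in> W" using h(3,4) assms(3) by auto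
  then show ?thesis using h by (intro exI[of _ u] exI[of _ v]) simp
qed

lemma deg_cyc:
  assumes "is_cycle A c" "w \<in> set c" "cycle_edges c \<subseteq> F"
  shows "\<exists>a b. a \<noteq> b \<and> {w,a} \<in> F \<and> {w,b} \<in> F"
proof -
  obtain a b where h: "a \<noteq> b" "{w,a} \<in> cycle_edges c" "{w,b} \<in> cycle_edges c"
    using cyc_deg2[OF assms(1,2)] by blast
  have "{w,a} \<in> F" "{w,b} \<in> F" using h assms(3) by auto
  then show ?thesis using h(1) by (intro exI[of _ a] exI[of _ b]) simp
qed

lemma cyc_closed:
  assumes "is_cycle A c" "cycle_edges c \<subseteq> F" "u \<in> set c" "u \<in> S"
    and "\<forall>u v. u \<in> S \<longrightarrow> {u,v} \<in> F \<longrightarrow> v \<in> S"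
  shows "set c \<subseteq> S"
  using assms(1,3,4)
proof (rule cyc_closure)
  fix i assume "i < length c" "c!i \<in> S"
  then show "c!((i+1) mod length c) \<in> S" using assms(2,5) cyc_edge_in[OF assms(1)] by blast
qed

lemma case_shared:
  assumes symA: "\<And>u v. A u v \<Longrightarrow> A v u" and c1: "is_cycle A c1" and c2: "is_cycle A c2"
    and sh: "set c1 \<inter> set c2 \<noteq> {}" and e: "e \<in> cycle_edges c2" "e \<notin> cycle_edges c1"
  shows "\<exists>vs i j. witness A vs i j"
proof -
  have "\<exists>x y. x \<in> set c1 \<and> {x,y} \<in> cycle_edges c2 \<and> {x,y} \<notin> cycle_edges c1"
  proof (rule ccontr)
    assume H: "\<not> ?thesis"
    obtain z where z: "z \<in> set c1" "z \<in> set c2" using sh by blast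
    have "set c2 \<subseteq> set c1"
      using c2 z(2,1)
    proof (rule cyc_closure)
      fix i assume i: "i < length c2" "c2!i \<in> set c1"
      have "{c2!i, c2!((i+1) mod length c2)} \<in> cycle_edges c2" using cyc_edge_in[OF c2 i(1)] .
      then have "{c2!i, c2!((i+1) mod length c2)} \<in> cycle_edges c1" using H i(2) by blast
      then show "c2!((i+1) mod length c2) \<in> set c1" by (rule cyc_edge_other[OF c1])
    qed
    obtain i where i: "i < length c2" "e = {c2!i, c2!((i+1) mod length c2)}"
      using e(1) by (auto simp: cycle_edges_def)
    have "c2!i \<in> set c1" using \<open>set c2 \<subseteq> set c1\<close> i(1) by auto
    then show False using H e i by blast
  qed
  then obtain x y where xy: "x \<in> set c1" "{x,y} \<in> cycle_edges c2" "{x,y} \<notin> cycle_edges c1" by blast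
  obtain a b where ab: "a \<noteq> b" "{x,a} \<in> cycle_edges c1" "{x,b} \<in> cycle_edges c1"
    using cyc_deg2[OF c1 xy(1)] by blast
  have ya: "a \<noteq> y" "b \<noteq> y" using ab xy by auto
  have x2: "x \<in> set c2" using cyc_edge_other'[OF c2 xy(2)] .
  define F where "F = cycle_edges c1 \<union> cycle_edges c2"
  define W where "W = set c1 \<union> set c2"
  show ?thesis
  proof (rule core_A[where F=F and W=W and x=x and a=a and b=b and c=y])
    show "\<And>u v. A u v \<Longrightarrow> A v u" by (rule symA)
    show "finite W" by (simp add: W_def)
    show "\<exists>u v. e = {u,v} \<and> u \<noteq> v \<and> u \<in> W \<and> v \<in> W \<and> A u v" if eF: "e \<in> F" for e
    proof -
      have "e \<in> cycle_edges c1 \<or> e \<in> cycle_edges c2" using eF by (simp add: F_def)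
      then show ?thesis
      proof
        assume "e \<in> cycle_edges c1" then show ?thesis by (rule Fp_cyc[OF c1]) (simp add: W_def)
      next
        assume "e \<in> cycle_edges c2" then show ?thesis by (rule Fp_cyc[OF c2]) (simp add: W_def)
      qed
    qed
    show "\<exists>a b. a \<noteq> b \<and> {w,a} \<in> F \<and> {w,b} \<in> F" if wW: "w \<in> W" for w
    proof -
      have "w \<in> set c1 \<or> w \<in> set c2" using wW by (simp add: W_def)
      then show ?thesis
      proof
        assume "w \<in> set c1" then show ?thesis by (rule deg_cyc[OF c1]) (simp add: F_def)
      next
        assume "w \<in> set c2" then show ?thesis by (rule deg_cyc[OF c2]) (simp add: F_def)
      qed
    qed
    show "{x,a} \<in> F" "{x,b} \<in> F" "{x,y} \<in> F" "a \<noteq> b" "a \<noteq> y" "b \<noteq> y"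
      using ab xy ya by (auto simp: F_def)
    fix S assume S: "S \<subseteq> W" "\<forall>u v. u \<in> S \<longrightarrow> {u,v} \<in> F \<longrightarrow> v \<in> S" "S \<noteq> {}"
    then obtain s where s: "s \<in> S" by blast
    show "x \<in> S"
    proof (cases "s \<in> set c1")
      case True
      then have "set c1 \<subseteq> S" using cyc_closed[OF c1 _ True s S(2)] by (simp add: F_def)
      then show ?thesis using xy by blast
    next
      case False
      then have "s \<in> set c2" using s S(1) by (auto simp: W_def)
      then have "set c2 \<subseteq> S" using cyc_closed[OF c2 _ _ s S(2)] by (simp add: F_def)
      then show ?thesis using x2 by blast
    qed
  qed
qed

lemma case_disj:
  assumes symA: "\<And>u v. A u v \<Longrightarrow> A v u" and c1: "is_cycle A c1" and c2: "is_cycle A c2"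
    and Q: "distinct Q" "successively A Q" "2 \<le> length Q" "Q!0 \<in> set c1" "last Q \<in> set c2" "Q!1 \<notin> set c1"
  shows "\<exists>vs i j. witness A vs i j"
proof -
  define PE where "PE = {{Q!k, Q!Suc k} | k. Suc k < length Q}"
  define F where "F = cycle_edges c1 \<union> cycle_edges c2 \<union> PE"
  define W where "W = set c1 \<union> set c2 \<union> set Q"
  define x where "x = Q!0"
  have "Q \<noteq> []" using Q(3) by auto
  then have lastQ: "last Q = Q!(length Q - 1)" by (simp add: last_conv_nth)
  have PEp: "\<exists>u v. e = {u,v} \<and> u \<noteq> v \<and> u \<in> W \<and> v \<in> W \<and> A u v" if eP: "e \<in> PE" for e
  proof -
    obtain k where k: "Suc k < length Q" "e = {Q!k, Q!Suc k}" using eP by (auto simp: PE_def)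
    have "Q!k \<noteq> Q!Suc k" using Q(1) k(1) by (simp add: nth_eq_iff_index_eq)
    moreover have "A (Q!k) (Q!Suc k)" using Q(2) k(1) by (simp add: successively_nth)
    moreover have "Q!k \<in> W" "Q!Suc k \<in> W" using k(1) by (auto simp: W_def)
    ultimately show ?thesis using k by blast
  qed
  have PEin: "{Q!k, Q!Suc k} \<in> PE" if "Suc k < length Q" for k using that by (auto simp: PE_def)
  obtain a b where ab: "a \<noteq> b" "{x,a} \<in> cycle_edges c1" "{x,b} \<in> cycle_edges c1"
    using cyc_deg2[OF c1 Q(4)] by (auto simp: x_def)
  have abc1: "a \<in> set c1" "b \<in> set c1" using ab cyc_edge_other[OF c1] by blast+
  have xc: "{x, Q!1} \<in> PE" using PEin[of 0] Q(3) by (simp add: x_def)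
  have Sclosed: "set Q \<subseteq> S" if S: "\<forall>u v. u \<in> S \<longrightarrow> {u,v} \<in> F \<longrightarrow> v \<in> S" and k: "k < length Q" "Q!k \<in> S" for S k
  proof (rule path_closure[OF _ k])
    fix i assume i: "Suc i < length Q"
    have "{Q!i, Q!Suc i} \<in> F" "{Q!Suc i, Q!i} \<in> F" using PEin[OF i] by (auto simp: F_def insert_commute)
    then show "Q!i \<in> S \<longleftrightarrow> Q!Suc i \<in> S" using S by blast
  qed
  show ?thesis
  proof (rule core_A[where F=F and W=W and x=x and a=a and b=b and c="Q!1"])
    show "\<And>u v. A u v \<Longrightarrow> A v u" by (rule symA)
    show "finite W" by (auto simp: W_def)
    show "\<exists>u v. e = {u,v} \<and> u \<noteq> v \<and> u \<in> W \<and> v \<in> W \<and> A u v" if eF: "e \<in> F" for e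
    proof -
      consider "e \<in> cycle_edges c1" | "e \<in> cycle_edges c2" | "e \<in> PE" using eF by (auto simp: F_def)
      then show ?thesis
      proof cases
        case 1 then show ?thesis by (rule Fp_cyc[OF c1]) (auto simp: W_def)
      next
        case 2 then show ?thesis by (rule Fp_cyc[OF c2]) (auto simp: W_def)
      next
        case 3 then show ?thesis by (rule PEp)
      qed
    qed
    show "\<exists>a b. a \<noteq> b \<and> {w,a} \<in> F \<and> {w,b} \<in> F" if w: "w \<in> W" for w
    proof -
      consider "w \<in> set c1" | "w \<in> set c2" | "w \<in> set Q" using w by (auto simp: W_def)
      then show ?thesis
      proof cases
        case 1 then show ?thesis by (rule deg_cyc[OF c1]) (auto simp: F_def)
      next
        case 2 then show ?thesis by (rule deg_cyc[OF c2]) (auto simp: F_def)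
      next
        case 3
        then obtain k where k: "k < length Q" "Q!k = w" by (auto simp: in_set_conv_nth)
        show ?thesis
        proof (cases "k = 0")
          case True
          then have "w \<in> set c1" using Q(4) k by simp
          then show ?thesis by (rule deg_cyc[OF c1]) (auto simp: F_def)
        next
          case k0: False
          show ?thesis
          proof (cases "k = length Q - 1")
            case True
            then have "w \<in> set c2" using Q(5) k lastQ by simp
            then show ?thesis by (rule deg_cyc[OF c2]) (auto simp: F_def)
          next
            case False
            then have sk: "Suc k < length Q" using k by linarith
            have e1: "{w, Q!Suc k} \<in> F" using PEin[OF sk] k by (simp add: F_def)
            have "Suc (k-1) < length Q" "Suc (k - 1) = k" using k k0 by auto
            then have e2: "{w, Q!(k-1)} \<in> F" using PEin[of "k-1"] k by (simp add: F_def insert_commute)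
            have "Q!Suc k \<noteq> Q!(k-1)" using Q(1) sk k0 by (simp add: nth_eq_iff_index_eq)
            then show ?thesis using e1 e2 by blast
          qed
        qed
      qed
    qed
    show "{x,a} \<in> F" "{x,b} \<in> F" "{x,Q!1} \<in> F" "a \<noteq> b" "a \<noteq> Q!1" "b \<noteq> Q!1"
      using ab xc abc1 Q(6) by (auto simp: F_def)
    fix S assume S: "S \<subseteq> W" "\<forall>u v. u \<in> S \<longrightarrow> {u,v} \<in> F \<longrightarrow> v \<in> S" "S \<noteq> {}"
    then obtain s where s: "s \<in> S" by blast
    have Q0: "0 < length Q" using Q(3) by linarith
    consider "s \<in> set c1" | "s \<in> set c2" | "s \<in> set Q" using s S(1) by (auto simp: W_def)
    then show "x \<in> S"
    proof cases
      case 1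
      have "cycle_edges c1 \<subseteq> F" by (auto simp: F_def)
      then have "set c1 \<subseteq> S" using cyc_closed[OF c1 _ 1 s S(2)] by blast
      then show ?thesis using Q(4) by (auto simp: x_def)
    next
      case 2
      have "cycle_edges c2 \<subseteq> F" by (auto simp: F_def)
      then have "set c2 \<subseteq> S" using cyc_closed[OF c2 _ 2 s S(2)] by blast
      then have "Q!(length Q - 1) \<in> S" using Q(5) lastQ by auto
      moreover have "length Q - 1 < length Q" using Q0 by simp
      ultimately have "set Q \<subseteq> S" using Sclosed[OF S(2)] by blast
      then show ?thesis using Q0 by (auto simp: x_def)
    next
      case 3
      then obtain k where "k < length Q" "Q!k = s" by (auto simp: in_set_conv_nth)
      then have "set Q \<subseteq> S" using Sclosed[OF S(2)] s by auto
      then show ?thesis using Q0 by (auto simp: x_def)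
    qed
  qed
qed

lemma graph_main:
  assumes symA: "\<And>u v. A u v \<Longrightarrow> A v u" and cc: "complex_component V A C"
  shows "\<exists>vs i j. witness A vs i j"
proof -
  obtain c1 c2 where c: "is_cycle A c1" "is_cycle A c2" "set c1 \<subseteq> C" "set c2 \<subseteq> C"
    "cycle_edges c1 \<noteq> cycle_edges c2" and CC: "C \<in> components V A"
    using cc by (auto simp: complex_component_def)
  obtain v where v: "C = {w \<in> V. A\<^sup>*\<^sup>* v w}" using CC by (auto simp: components_def)
  have sp: "symp (A\<^sup>*\<^sup>*)" by (rule symp_rtranclp) (use symA in \<open>auto simp: symp_def\<close>)
  have reach: "A\<^sup>*\<^sup>* u w" if "u \<in> set c1" "w \<in> set c2" for u w
  proof -
    have "A\<^sup>*\<^sup>* v u" "A\<^sup>*\<^sup>* v w" using that c v by auto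
    then show ?thesis using sp by (meson rtranclp_trans sympD)
  qed
  show ?thesis
  proof (cases "set c1 \<inter> set c2 = {}")
    case True
    obtain u w where uw: "u \<in> set c1" "w \<in> set c2"
      using c(1,2) by (metis is_cycle_def length_0_conv list.set_sel(1) not_numeral_le_zero)
    obtain Q where "distinct Q \<and> successively A Q \<and> 2 \<le> length Q \<and> Q!0 \<in> set c1 \<and> last Q \<in> set c2 \<and> Q!1 \<notin> set c1"
      using shortest[OF reach[OF uw] uw True] by blast
    then show ?thesis using case_disj[OF symA c(1,2)] by blast
  next
    case False
    show ?thesis
    proof (cases "cycle_edges c2 \<subseteq> cycle_edges c1")
      case True
      then obtain e where "e \<in> cycle_edges c1" "e \<notin> cycle_edges c2" using c(5) by blast
      then show ?thesis using case_shared[OF symA c(2) c(1)] False by blast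
    next
      case False
      then obtain e where "e \<in> cycle_edges c2" "e \<notin> cycle_edges c1" by blast
      then show ?thesis using case_shared[OF symA c(1) c(2)] \<open>set c1 \<inter> set c2 \<noteq> {}\<close> by blast
    qed
  qed
qed


lemma bip_adj_sym: "bip_adj n1 n2 E u v \<Longrightarrow> bip_adj n1 n2 E v u"
  by (auto simp: bip_adj_def split: sum.splits)

definition side :: "nat \<Rightarrow> nat \<Rightarrow> bool \<Rightarrow> nat + nat \<Rightarrow> bool" where
  "side n1 n2 b x \<longleftrightarrow> (if b then (\<exists>i<n1. x = Inl i) else (\<exists>j<n2. x = Inr j))"

fun alt :: "nat \<Rightarrow> nat \<Rightarrow> bool \<Rightarrow> nat \<Rightarrow> (nat + nat) list set" where
  "alt n1 n2 b 0 = {[]}"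
| "alt n1 n2 b (Suc m) = (\<lambda>(x,xs). x # xs) ` ({x. side n1 n2 b x} \<times> alt n1 n2 (\<not>b) m)"

lemma side_set: "{x. side n1 n2 b x} = (if b then Inl ` {..<n1} else Inr ` {..<n2})"
  by (auto simp: side_def)

lemma side_card: "finite {x. side n1 n2 b x} \<and> card {x. side n1 n2 b x} = (if b then n1 else n2)"
  by (simp add: side_set card_image)

lemma alt_fin_card:
  "finite (alt n1 n2 b m) \<and> card (alt n1 n2 b m) \<le> (if b then n1 else n2)^((m+1) div 2) * (if b then n2 else n1)^(m div 2)"
proof (induction m arbitrary: b)
  case 0 then show ?case by simp
next
  case (Suc m)
  let ?X = "{x. side n1 n2 b x} \<times> alt n1 n2 (\<not>b) m"
  have fin: "finite ?X" using Suc.IH[of "\<not>b"] side_card[of n1 n2 b] by simp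
  have "card (alt n1 n2 b (Suc m)) \<le> card ?X" using fin by (simp add: card_image_le)
  also have "\<dots> = (if b then n1 else n2) * card (alt n1 n2 (\<not>b) m)"
    using side_card[of n1 n2 b] by (simp add: card_cartesian_product)
  also have "\<dots> \<le> (if b then n1 else n2) * ((if \<not>b then n1 else n2)^((m+1) div 2) * (if \<not>b then n2 else n1)^(m div 2))"
    using Suc.IH[of "\<not>b"] by (intro mult_left_mono) auto
  also have "\<dots> = (if b then n1 else n2)^((Suc m+1) div 2) * (if b then n2 else n1)^(Suc m div 2)"
  proof -
    have "(Suc m + 1) div 2 = Suc (m div 2)" "Suc m div 2 = (m+1) div 2" by auto
    then show ?thesis by (cases b) (simp_all add: ac_simps)
  qed
  finally show ?case using fin by simp
qed

lemma alt_len: "vs \<in> alt n1 n2 b m \<Longrightarrow> length vs = m"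
  by (induction m arbitrary: b vs) auto

lemma adj_side: "bip_adj n1 n2 E x y \<Longrightarrow> side n1 n2 b x \<Longrightarrow> side n1 n2 (\<not>b) y"
  by (cases b) (auto simp: bip_adj_def side_def split: sum.splits)

lemma adj_side0: "bip_adj n1 n2 E x y \<Longrightarrow> side n1 n2 True x \<or> side n1 n2 False x"
  by (auto simp: bip_adj_def side_def split: sum.splits)

lemma succ_alt: "successively (bip_adj n1 n2 E) (x # xs) \<Longrightarrow> side n1 n2 b x \<Longrightarrow> x # xs \<in> alt n1 n2 b (length (x#xs))"
proof (induction xs arbitrary: x b)
  case Nil then show ?case by auto
next
  case (Cons y ys)
  have "bip_adj n1 n2 E x y" "successively (bip_adj n1 n2 E) (y # ys)" using Cons.prems by auto
  then have sy: "side n1 n2 (\<not>b) y" using Cons.prems(2) adj_side by blast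
  have "y # ys \<in> alt n1 n2 (\<not>b) (length (y#ys))" using Cons.IH[OF _ sy] \<open>successively (bip_adj n1 n2 E) (y # ys)\<close> by blast
  then have "(x, y#ys) \<in> {x. side n1 n2 b x} \<times> alt n1 n2 (\<not>b) (length (y#ys))" using Cons.prems(2) by simp
  then have "x # y # ys \<in> (\<lambda>(x,xs). x # xs) ` ({x. side n1 n2 b x} \<times> alt n1 n2 (\<not>b) (length (y#ys)))"
    by (rule rev_image_eqI) simp
  then show ?case by (simp only: length_Cons alt.simps)
qed

definition ed :: "nat + nat \<Rightarrow> nat + nat \<Rightarrow> nat \<times> nat" where
  "ed u v = (case u of Inl i \<Rightarrow> (i, case v of Inr j \<Rightarrow> j | Inl _ \<Rightarrow> 0)
                     | Inr j \<Rightarrow> ((case v of Inl i \<Rightarrow> i | Inr _ \<Rightarrow> 0), j))"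

lemma adj_ed: "bip_adj n1 n2 E u v \<Longrightarrow> ed u v \<in> {..<n1} \<times> {..<n2} \<and> E (ed u v)"
  by (auto simp: bip_adj_def ed_def split: sum.splits)

lemma ed_inj: "bip_adj n1 n2 E u v \<Longrightarrow> bip_adj n1 n2 E' u' v' \<Longrightarrow> ed u v = ed u' v' \<Longrightarrow> {u,v} = {u',v'}"
  by (auto simp: bip_adj_def ed_def split: sum.splits)

lemma prob_all:
  assumes S: "S \<subseteq> {..<n1}\<times>{..<n2}" and p: "0 \<le> p" "p \<le> 1"
  shows "measure_pmf.prob (bip_random_graph n1 n2 p) {E. \<forall>e\<in>S. E e} = p ^ card S"
proof -
  define D where "D = {..<n1}\<times>{..<n2}"
  have eq: "{E. \<forall>e\<in>S. E e} = Pi D (\<lambda>e. if e \<in> S then {True} else UNIV)"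
    using S by (auto simp: Pi_def D_def)
  have "measure_pmf.prob (bip_random_graph n1 n2 p) {E. \<forall>e\<in>S. E e}
     = (\<Prod>e\<in>D. measure_pmf.prob (bernoulli_pmf p) (if e \<in> S then {True} else UNIV))"
    unfolding eq bip_random_graph_def D_def by (rule measure_Pi_pmf_Pi) simp
  also have "\<dots> = (\<Prod>e\<in>D. (if e \<in> S then p else 1))"
    by (intro prod.cong) (auto simp: measure_pmf_single p)
  also have "\<dots> = p ^ card S"
    using S by (simp add: prod.If_cases D_def Int_absorb1 Int_absorb2 finite_subset)
  finally show ?thesis .
qed


lemma idx_inj:
  fixes m i j t t' :: nat and al be :: "nat \<Rightarrow> nat"
  assumes al_def: "\<And>t. al t = (if t < m - 1 then t else if t = m - 1 then 0 else m - 1)"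
  assumes be_def: "\<And>t. be t = (if t < m - 1 then t + 1 else if t = m - 1 then i else j)"
  assumes "2 \<le> i" "i < m" "j + 3 \<le> m" "\<not> (i = m - 1 \<and> j = 0)" "t \<le> m" "t' \<le> m"
    and h: "(al t = al t' \<and> be t = be t') \<or> (al t = be t' \<and> be t = al t')"
  shows "t = t'"
proof -
  have mm: "\<not> m < m - 1" "m \<noteq> m - 1" "\<not> m - 1 < m - 1" using assms(5) by auto
  consider "t < m - 1" | "t = m - 1" | "t = m" using assms(7) by linarith
  then show ?thesis
  proof cases
    case 1
    consider "t' < m - 1" | "t' = m - 1" | "t' = m" using assms(8) by linarith
    then show ?thesis proof cases
      case 1 then show ?thesis using h \<open>t < m - 1\<close> by (auto simp: al_def be_def)
    next
      case 2 then show ?thesis using h \<open>t < m - 1\<close> assms(3-6) mm by (auto simp: al_def be_def)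
    next
      case 3 then show ?thesis using h \<open>t < m - 1\<close> assms(3-6) mm by (auto simp: al_def be_def)
    qed
  next
    case 2
    consider "t' < m - 1" | "t' = m - 1" | "t' = m" using assms(8) by linarith
    then show ?thesis proof cases
      case 1 then show ?thesis using h \<open>t = m - 1\<close> assms(3-6) mm by (auto simp: al_def be_def)
    next
      case 2 then show ?thesis using \<open>t = m - 1\<close> by simp
    next
      case 3 then show ?thesis using h \<open>t = m - 1\<close> assms(3-6) mm by (auto simp: al_def be_def)
    qed
  next
    case 3
    consider "t' < m - 1" | "t' = m - 1" | "t' = m" using assms(8) by linarith
    then show ?thesis proof cases
      case 1 then show ?thesis using h \<open>t = m\<close> assms(3-6) mm by (auto simp: al_def be_def)
    next
      case 2 then show ?thesis using h \<open>t = m\<close> assms(3-6) mm by (auto simp: al_def be_def)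
    next
      case 3 then show ?thesis using \<open>t = m\<close> by simp
    qed
  qed
qed

lemma ev_bound:
  assumes p: "0 \<le> p" "p \<le> 1"
  shows "measure_pmf.prob (bip_random_graph n1 n2 p) {E. witness (bip_adj n1 n2 E) vs i j} \<le> p ^ (length vs + 1)"
proof (cases "{E. witness (bip_adj n1 n2 E) vs i j} = {}")
  case True then show ?thesis using p by simp
next
  case False
  then obtain E0 where E0: "witness (bip_adj n1 n2 E0) vs i j" by blast
  define m where "m = length vs"
  define \<alpha> where "\<alpha> t = (if t < m - 1 then t else if t = m - 1 then 0 else m - 1)" for t
  define \<beta> where "\<beta> t = (if t < m - 1 then t + 1 else if t = m - 1 then i else j)" for t
  define f where "f t = ed (vs!\<alpha> t) (vs!\<beta> t)" for t
  have W0: "distinct vs" "2 \<le> i" "i < m" "j + 3 \<le> m" "\<not> (i = m - 1 \<and> j = 0)"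
    using E0 by (auto simp: witness_def m_def)
  have ab_lt: "\<alpha> t < m" "\<beta> t < m" if "t \<le> m" for t
    using W0 that by (auto simp: \<alpha>_def \<beta>_def)
  have adj: "bip_adj n1 n2 E (vs!\<alpha> t) (vs!\<beta> t)" if wE: "witness (bip_adj n1 n2 E) vs i j" and tm: "t \<le> m" for E t
  proof -
    have w: "successively (bip_adj n1 n2 E) vs" "bip_adj n1 n2 E (vs!0) (vs!i)"
      "bip_adj n1 n2 E (vs!(m - 1)) (vs!j)" using wE by (auto simp: witness_def m_def)
    consider "t < m - 1" | "t = m - 1" | "t = m" using tm by linarith
    then show ?thesis
    proof cases
      case 1 then show ?thesis using w(1) successively_nth[OF w(1), of t]
        by (simp add: \<alpha>_def \<beta>_def m_def)
    next
      case 2 then show ?thesis using w(2) by (simp add: \<alpha>_def \<beta>_def)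
    next
      case 3
      then have "\<not> t < m - 1" "t \<noteq> m - 1" using W0 by auto
      then show ?thesis using w(3) by (simp add: \<alpha>_def \<beta>_def)
    qed
  qed
  define S where "S = f ` {..m}"
  have sub: "{E. witness (bip_adj n1 n2 E) vs i j} \<subseteq> {E. \<forall>e\<in>S. E e}"
  proof (intro subsetI CollectI ballI)
    fix E e assume "E \<in> {E. witness (bip_adj n1 n2 E) vs i j}" "e \<in> S"
    then obtain t where t: "witness (bip_adj n1 n2 E) vs i j" "t \<le> m" "e = f t" by (auto simp: S_def)
    then show "E e" using adj_ed[OF adj[OF t(1) t(2)]] by (simp add: f_def)
  qed
  have Ssub: "S \<subseteq> {..<n1}\<times>{..<n2}"
  proof
    fix e assume "e \<in> S"
    then obtain t where t: "t \<le> m" "e = f t" by (auto simp: S_def)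
    then show "e \<in> {..<n1}\<times>{..<n2}" using adj_ed[OF adj[OF E0 t(1)]] by (simp add: f_def)
  qed
  have inj: "inj_on f {..m}"
  proof (rule inj_onI)
    fix t t' assume t: "t \<in> {..m}" and t': "t' \<in> {..m}" and eq: "f t = f t'"
    have tm: "t \<le> m" "t' \<le> m" using t t' by auto
    have "ed (vs!\<alpha> t) (vs!\<beta> t) = ed (vs!\<alpha> t') (vs!\<beta> t')" using eq by (simp add: f_def)
    then have "{vs!\<alpha> t, vs!\<beta> t} = {vs!\<alpha> t', vs!\<beta> t'}"
      by (rule ed_inj[OF adj[OF E0 tm(1)] adj[OF E0 tm(2)]])
    then have "(vs!\<alpha> t = vs!\<alpha> t' \<and> vs!\<beta> t = vs!\<beta> t') \<or> (vs!\<alpha> t = vs!\<beta> t' \<and> vs!\<beta> t = vs!\<alpha> t')"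
      by (auto simp: doubleton_eq_iff)
    moreover have "vs!\<alpha> t = vs!\<alpha> t' \<longleftrightarrow> \<alpha> t = \<alpha> t'" "vs!\<beta> t = vs!\<beta> t' \<longleftrightarrow> \<beta> t = \<beta> t'"
      "vs!\<alpha> t = vs!\<beta> t' \<longleftrightarrow> \<alpha> t = \<beta> t'" "vs!\<beta> t = vs!\<alpha> t' \<longleftrightarrow> \<beta> t = \<alpha> t'"
      using ab_lt[OF tm(1)] ab_lt[OF tm(2)] nth_eq_iff_index_eq[OF W0(1)] by (simp_all add: m_def)
    ultimately have h: "(\<alpha> t = \<alpha> t' \<and> \<beta> t = \<beta> t') \<or> (\<alpha> t = \<beta> t' \<and> \<beta> t = \<alpha> t')"
      by simp
    show "t = t'"
      by (rule idx_inj[OF \<alpha>_def \<beta>_def W0(2) W0(3) W0(4) W0(5) tm h])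
  qed
  have cS: "card S = m + 1" using inj by (simp add: S_def card_image)
  have "measure_pmf.prob (bip_random_graph n1 n2 p) {E. witness (bip_adj n1 n2 E) vs i j}
      \<le> measure_pmf.prob (bip_random_graph n1 n2 p) {E. \<forall>e\<in>S. E e}"
    by (rule measure_pmf.finite_measure_mono[OF sub]) simp
  also have "\<dots> = p ^ (length vs + 1)" using prob_all[OF Ssub p] cS by (simp add: m_def)
  finally show ?thesis .
qed



lemma pow_bound:
  fixes x y d :: real and m :: nat
  assumes x: "0 < x" "x \<le> y" and d: "0 < d"
  shows "x^((m+1) div 2) * y^(m div 2) * (d / sqrt (x*y))^(m+1) \<le> d^(m+1) / x"
    and "y^((m+1) div 2) * x^(m div 2) * (d / sqrt (x*y))^(m+1) \<le> d^(m+1) / x"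
proof -
  define s where "s = sqrt (x*y)"
  have y: "0 < y" using x by linarith
  have s: "0 < s" "s^2 = x*y" using x y by (auto simp: s_def)
  have "x*x \<le> x*y" using x by (intro mult_left_mono) auto
  then have "sqrt (x*x) \<le> sqrt (x*y)" by (rule real_sqrt_le_mono)
  then have xs: "x \<le> s" using x by (simp add: s_def)
  have ss: "s * s = x*y" using s by (simp add: power2_eq_square)
  have p: "(d / s)^(m+1) = d^(m+1) / s^(m+1)" by (simp add: power_divide)
  have "x^((m+1) div 2) * y^(m div 2) * (d / s)^(m+1) \<le> d^(m+1) / x \<and>
        y^((m+1) div 2) * x^(m div 2) * (d / s)^(m+1) \<le> d^(m+1) / x"
  proof (cases "even m")
    case True
    then obtain k where k: "m = 2*k" by blast
    have e: "(m+1) div 2 = k" "m div 2 = k" using k by auto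
    have xy: "x^k * y^k = s^(2*k)" using s by (simp add: power_mult power_mult_distrib)
    have "x^k * y^k * (d^(m+1) / s^(m+1)) = d^(m+1) / s"
      using xy s k by (simp add: field_simps power_add)
    also have "\<dots> \<le> d^(m+1) / x" using xs x d by (intro divide_left_mono) auto
    finally show ?thesis using e p by (simp add: mult.commute)
  next
    case False
    then obtain k where k: "m = 2*k + 1" using oddE by blast
    have e: "(m+1) div 2 = k + 1" "m div 2 = k" using k by auto
    have xy: "x^k * y^k = s^(2*k)" using s by (simp add: power_mult power_mult_distrib)
    have 1: "x^(k+1) * y^k * (d^(m+1) / s^(m+1)) = d^(m+1) / y"
      using xy s ss k x y by (simp add: field_simps power_add power_mult)
    have 2: "y^(k+1) * x^k * (d^(m+1) / s^(m+1)) = d^(m+1) / x"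
      using xy s ss k x y by (simp add: field_simps power_add power_mult)
    have 3: "d^(m+1) / y \<le> d^(m+1) / x" using x d by (intro divide_left_mono) auto
    show ?thesis using 1 2 3 e p by simp
  qed
  then show "x^((m+1) div 2) * y^(m div 2) * (d / sqrt (x*y))^(m+1) \<le> d^(m+1) / x"
    and "y^((m+1) div 2) * x^(m div 2) * (d / sqrt (x*y))^(m+1) \<le> d^(m+1) / x"
    by (simp_all add: s_def)
qed

lemma summ:
  fixes d :: real assumes "0 < d" "d < 1"
  shows "summable (\<lambda>m. real m * real m * d^(m+1))"
proof -
  define r where "r = sqrt (sqrt d)"
  have r: "0 < r" "r < 1" "r^2 = sqrt d" "sqrt d ^ 2 = d" using assms by (auto simp: r_def)
  have "(\<lambda>n. of_nat n * r ^ n) \<longlonglongrightarrow> (0::real)"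
    using r by (intro powser_times_n_limit_0) simp
  from LIMSEQ_D[OF this zero_less_one] obtain N where N0: "\<forall>n\<ge>N. norm (real n * r ^ n - 0) < 1"
    by blast
  have N: "norm (real n * r ^ n - 0) < 1" if "n \<ge> N" for n using N0 that by blast
  show ?thesis
  proof (rule summable_comparison_test')
    show "summable (\<lambda>n. d * sqrt d ^ n)"
      using r assms by (intro summable_mult summable_geometric) auto
    fix n assume n: "N \<le> n"
    have a: "0 \<le> real n * r^n" using r by simp
    have a2: "real n * r^n \<le> 1" using N[OF n] by simp
    have "(real n * r^n)^2 \<le> 1" using a a2 by (intro power_le_one) auto
    then have b: "(real n * r^n)^2 * sqrt d ^ n \<le> sqrt d ^ n"
      using assms by (intro mult_left_le_one_le) auto
    have "real n * real n * d^(n+1) = d * ((real n * r^n)^2 * sqrt d ^ n)"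
    proof -
      have sd: "sqrt d * sqrt d = d" "r * r = sqrt d" using assms by (simp_all add: r_def)
      have "d^n = (sqrt d * sqrt d)^n" using sd by simp
      also have "\<dots> = (sqrt d ^ n) * (sqrt d ^ n)" by (rule power_mult_distrib)
      finally have e1: "d^n = (sqrt d ^ n) * (sqrt d ^ n)" .
      have "sqrt d ^ n = (r * r)^n" using sd by simp
      also have "\<dots> = r^n * r^n" by (rule power_mult_distrib)
      finally have e2: "sqrt d ^ n = r^n * r^n" .
      show ?thesis using e1 e2 by (simp add: power2_eq_square algebra_simps)
    qed
    then show "norm (real n * real n * d^(n+1)) \<le> d * sqrt d ^ n"
      using b assms by (simp add: mult_left_mono)
  qed
qed


lemma hcc_witness: "has_complex_component n1 n2 E \<Longrightarrow> \<exists>vs i j. witness (bip_adj n1 n2 E) vs i j"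
  unfolding has_complex_component_def using graph_main[of "bip_adj n1 n2 E", OF bip_adj_sym] by blast

lemma alt_set: "vs \<in> alt n1 n2 b m \<Longrightarrow> set vs \<subseteq> Inl ` {..<n1} \<union> Inr ` {..<n2}"
proof (induction m arbitrary: b vs)
  case 0 then show ?case by simp
next
  case (Suc m)
  then obtain x xs where "vs = x # xs" "side n1 n2 b x" "xs \<in> alt n1 n2 (\<not>b) m" by auto
  moreover have "set xs \<subseteq> Inl ` {..<n1} \<union> Inr ` {..<n2}" using Suc.IH calculation(3) by blast
  ultimately show ?case by (auto simp: side_def split: if_splits)
qed

lemma witness_T:
  assumes w: "witness (bip_adj n1 n2 E) vs i j"
  shows "\<exists>b. vs \<in> alt n1 n2 b (length vs)" "length vs \<le> n1 + n2" "i < length vs" "j < length vs"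
proof -
  have W: "distinct vs" "successively (bip_adj n1 n2 E) vs" "3 \<le> length vs" "i < length vs" "j + 3 \<le> length vs"
    using w by (auto simp: witness_def)
  obtain x xs where vs: "vs = x # xs" using W(3) by (cases vs) auto
  have "bip_adj n1 n2 E (vs!0) (vs!Suc 0)" using successively_nth[OF W(2), of 0] W(3) by simp
  then obtain b where b: "side n1 n2 b x" using adj_side0 vs by fastforce
  have "vs \<in> alt n1 n2 b (length vs)" using succ_alt[of n1 n2 E x xs b] W(2) b vs by simp
  then show "\<exists>b. vs \<in> alt n1 n2 b (length vs)" by blast
  have "length vs = card (set vs)" using W(1) by (simp add: distinct_card)
  also have "\<dots> \<le> card (Inl ` {..<n1} \<union> Inr ` {..<n2} :: (nat + nat) set)"
    using alt_set[OF \<open>vs \<in> alt n1 n2 b (length vs)\<close>] by (intro card_mono) auto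
  also have "\<dots> \<le> card (Inl ` {..<n1} :: (nat + nat) set) + card (Inr ` {..<n2} :: (nat + nat) set)"
    by (rule card_Un_le)
  also have "\<dots> \<le> n1 + n2" by (simp add: card_image)
  finally show "length vs \<le> n1 + n2" .
  show "i < length vs" "j < length vs" using W by auto
qed

lemma prob_bound:
  fixes d :: real
  assumes d: "0 < d" "d < 1" and n: "1 \<le> n1" "n1 \<le> n2"
  shows "measure_pmf.prob (bip_random_graph n1 n2 (d / sqrt (real n1 * real n2))) {E. has_complex_component n1 n2 E}
     \<le> 2 * (\<Sum>m. real m * real m * d^(m+1)) / real n1"
proof -
  define p where "p = d / sqrt (real n1 * real n2)"
  define M where "M = bip_random_graph n1 n2 p"
  define K where "K = (\<Sum>m. real m * real m * d^(m+1))"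
  define N where "N = n1 + n2"
  have x: "0 < real n1" "real n1 \<le> real n2" using n by auto
  have "(1::real) \<le> real n1" "(1::real) \<le> real n2" using n by auto
  then have "(1::real) * 1 \<le> real n1 * real n2" by (intro mult_mono) auto
  then have s1: "1 \<le> sqrt (real n1 * real n2)" by simp
  have p0: "0 \<le> p" using d by (simp add: p_def)
  have p1: "p \<le> 1"
  proof -
    have "p \<le> d" unfolding p_def using d s1 by (simp add: divide_le_eq)
    then show ?thesis using d by simp
  qed
  define T where "T = (SIGMA b:(UNIV::bool set). SIGMA m:{..N}. alt n1 n2 b m \<times> ({..<m} \<times> {..<m}))"
  define Ev where "Ev t = {E. witness (bip_adj n1 n2 E) (fst (snd (snd t))) (fst (snd (snd (snd t)))) (snd (snd (snd (snd t))))}"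
    for t :: "bool \<times> nat \<times> (nat + nat) list \<times> nat \<times> nat"
  have finalt: "finite (alt n1 n2 b m)" for b m using alt_fin_card by blast
  have finT: "finite T" unfolding T_def using finalt by (intro finite_SigmaI) auto
  have cover: "{E. has_complex_component n1 n2 E} \<subseteq> (\<Union>t\<in>T. Ev t)"
  proof
    fix E assume "E \<in> {E. has_complex_component n1 n2 E}"
    then obtain vs i j where w: "witness (bip_adj n1 n2 E) vs i j" using hcc_witness by blast
    obtain b where b: "vs \<in> alt n1 n2 b (length vs)" using witness_T(1)[OF w] by blast
    have "(b, length vs, vs, i, j) \<in> T" using b witness_T(2-4)[OF w] by (auto simp: T_def N_def)
    moreover have "E \<in> Ev (b, length vs, vs, i, j)" using w by (simp add: Ev_def)
    ultimately show "E \<in> (\<Union>t\<in>T. Ev t)" by blast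
  qed
  have "measure_pmf.prob M {E. has_complex_component n1 n2 E} \<le> measure_pmf.prob M (\<Union>t\<in>T. Ev t)"
    by (rule measure_pmf.finite_measure_mono[OF cover]) simp
  also have "\<dots> \<le> (\<Sum>t\<in>T. measure_pmf.prob M (Ev t))"
    by (rule measure_pmf.finite_measure_subadditive_finite[OF finT]) simp
  also have "\<dots> \<le> (\<Sum>t\<in>T. p ^ (fst (snd t) + 1))"
  proof (rule sum_mono)
    fix t assume t: "t \<in> T"
    then obtain b m vs i j where tt: "t = (b, m, vs, i, j)" "vs \<in> alt n1 n2 b m" by (auto simp: T_def)
    have "length vs = m" using alt_len[OF tt(2)] .
    then show "measure_pmf.prob M (Ev t) \<le> p ^ (fst (snd t) + 1)"
      using ev_bound[OF p0 p1, of n1 n2 vs i j] tt by (simp add: Ev_def M_def)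
  qed
  also have "\<dots> = (\<Sum>b\<in>UNIV. \<Sum>m\<in>{..N}. \<Sum>x\<in>alt n1 n2 b m \<times> ({..<m} \<times> {..<m}). p ^ (m + 1))"
  proof -
    have fin2: "finite (SIGMA m:{..N}. alt n1 n2 b m \<times> ({..<m} \<times> {..<m}))" for b
      using finalt by (intro finite_SigmaI) auto
    have "(\<Sum>b\<in>UNIV. \<Sum>m\<in>{..N}. \<Sum>x\<in>alt n1 n2 b m \<times> ({..<m} \<times> {..<m}). p ^ (m + 1))
        = (\<Sum>b\<in>UNIV. \<Sum>y\<in>(SIGMA m:{..N}. alt n1 n2 b m \<times> ({..<m} \<times> {..<m})). p ^ (fst y + 1))"
    proof (intro sum.cong refl)
      fix b :: bool
      show "(\<Sum>m\<in>{..N}. \<Sum>x\<in>alt n1 n2 b m \<times> ({..<m} \<times> {..<m}). p ^ (m + 1))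
          = (\<Sum>y\<in>(SIGMA m:{..N}. alt n1 n2 b m \<times> ({..<m} \<times> {..<m})). p ^ (fst y + 1))"
        using sum.Sigma[of "{..N}" "\<lambda>m. alt n1 n2 b m \<times> ({..<m} \<times> {..<m})" "\<lambda>m x. p ^ (m + 1)"] finalt
        by (simp add: split_def)
    qed
    also have "\<dots> = (\<Sum>t\<in>T. p ^ (fst (snd t) + 1))"
      using sum.Sigma[of "UNIV::bool set" "\<lambda>b. SIGMA m:{..N}. alt n1 n2 b m \<times> ({..<m} \<times> {..<m})"
          "\<lambda>b y. p ^ (fst y + 1)"] fin2
      by (simp add: split_def T_def)
    finally show ?thesis by simp
  qed
  also have "\<dots> = (\<Sum>b\<in>UNIV. \<Sum>m\<in>{..N}. real (card (alt n1 n2 b m)) * (real m * real m) * p ^ (m + 1))"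
    using finalt by (simp add: card_cartesian_product)
  also have "\<dots> \<le> (\<Sum>b\<in>(UNIV::bool set). \<Sum>m\<in>{..N}. real m * real m * d^(m+1) / real n1)"
  proof (intro sum_mono)
    fix b :: bool and m :: nat
    have c: "real (card (alt n1 n2 b m)) \<le> real (if b then n1 else n2)^((m+1) div 2) * real (if b then n2 else n1)^(m div 2)"
    proof -
      have c0: "card (alt n1 n2 b m) \<le> (if b then n1 else n2)^((m+1) div 2) * (if b then n2 else n1)^(m div 2)"
        using alt_fin_card by blast
      have "real (card (alt n1 n2 b m)) \<le> real ((if b then n1 else n2)^((m+1) div 2) * (if b then n2 else n1)^(m div 2))"
        using c0 by (rule of_nat_mono)
      also have "\<dots> = real (if b then n1 else n2)^((m+1) div 2) * real (if b then n2 else n1)^(m div 2)"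
        by (simp only: of_nat_mult of_nat_power)
      finally show ?thesis .
    qed
    have "real (card (alt n1 n2 b m)) * p ^ (m + 1) \<le> d^(m+1) / real n1"
    proof -
      have "real (card (alt n1 n2 b m)) * p ^ (m + 1)
          \<le> real (if b then n1 else n2)^((m+1) div 2) * real (if b then n2 else n1)^(m div 2) * p^(m+1)"
        using c p0 by (intro mult_right_mono) auto
      also have "\<dots> \<le> d^(m+1) / real n1"
        using pow_bound[OF x d(1), of m] by (cases b) (simp_all add: p_def)
      finally show ?thesis .
    qed
    then have "real (card (alt n1 n2 b m)) * p ^ (m + 1) * (real m * real m) \<le> d^(m+1) / real n1 * (real m * real m)"
      by (intro mult_right_mono) auto
    then show "real (card (alt n1 n2 b m)) * (real m * real m) * p ^ (m + 1) \<le> real m * real m * d^(m+1) / real n1"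
      by (simp add: algebra_simps)
  qed
  also have "\<dots> = 2 * (\<Sum>m\<in>{..N}. real m * real m * d^(m+1)) / real n1"
    by (simp add: UNIV_bool sum_divide_distrib[symmetric])
  also have "\<dots> \<le> 2 * K / real n1"
  proof -
    have sK: "(\<Sum>m\<in>{..N}. real m * real m * d^(m+1)) \<le> K"
      unfolding K_def by (rule sum_le_suminf[OF summ[OF d]]) (use d in auto)
    have "2 * (\<Sum>m\<in>{..N}. real m * real m * d^(m+1)) \<le> 2 * K" using sK by linarith
    then show ?thesis by (rule divide_right_mono) simp
  qed
  finally show ?thesis by (simp only: M_def p_def K_def)
qed

theorem lemma3p1:
  fixes d :: real and n2 :: "nat \<Rightarrow> nat"
  assumes "0 < d" and "d < 1"
    and "\<forall>\<^sub>F n1 in sequentially. n1 \<le> n2 n1"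
  shows "(\<lambda>n1. measure_pmf.prob
             (bip_random_graph n1 (n2 n1) (d / sqrt (real n1 * real (n2 n1))))
             {E. has_complex_component n1 (n2 n1) E}) \<longlonglongrightarrow> 0"
proof (rule tendsto_sandwich[where f="\<lambda>_. 0" and h="\<lambda>n1. 2 * (\<Sum>m. real m * real m * d^(m+1)) / real n1"])
  show "\<forall>\<^sub>F n1 in sequentially. 0 \<le> measure_pmf.prob
             (bip_random_graph n1 (n2 n1) (d / sqrt (real n1 * real (n2 n1))))
             {E. has_complex_component n1 (n2 n1) E}" by (intro always_eventually allI measure_nonneg)
  have "\<forall>\<^sub>F n1 in sequentially. 1 \<le> n1 \<and> n1 \<le> n2 n1"
    using eventually_ge_at_top[of 1] assms(3) by (rule eventually_conj)
  then show "\<forall>\<^sub>F n1 in sequentially. measure_pmf.prob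
             (bip_random_graph n1 (n2 n1) (d / sqrt (real n1 * real (n2 n1))))
             {E. has_complex_component n1 (n2 n1) E} \<le> 2 * (\<Sum>m. real m * real m * d^(m+1)) / real n1"
  proof (rule eventually_mono)
    fix n1 :: nat assume h: "1 \<le> n1 \<and> n1 \<le> n2 n1"
    show "measure_pmf.prob
             (bip_random_graph n1 (n2 n1) (d / sqrt (real n1 * real (n2 n1))))
             {E. has_complex_component n1 (n2 n1) E} \<le> 2 * (\<Sum>m. real m * real m * d^(m+1)) / real n1"
      using prob_bound[OF assms(1,2) conjunct1[OF h] conjunct2[OF h]] .
  qed
  show "(\<lambda>_. 0) \<longlonglongrightarrow> (0::real)" by simp
  show "(\<lambda>n1. 2 * (\<Sum>m. real m * real m * d^(m+1)) / real n1) \<longlonglongrightarrow> 0"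
    by (rule lim_const_over_n)
qed

end
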